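(* In the two-type heterogeneous SIS model described in the context, with $x_i=\lambda_i\widetilde d_i$ for $i=1,2$: (1) if $x_1>1$ and $x_2>1$, then diffusion occurs from a small seed for every $\pi\in(0,1)$; (2) if $x_1\le 1$ and $x_2\le 1$, then diffusion does not occur from a small seed for any $\pi\in(0,1)$; (3) if $x_1>1$ and $x_2\le 1$ (or $x_2>1$ and $x_1\le1$), then there exists $\pi^*\in(0,1)$ such that diffusion occurs from a small seed for every $\pi\in(\pi^*,1)$.
   Context: There are two types of agents, $i\in\{1,2\}$. For each type $i$, $P_i$ is a probability distribution on the nonnegative integers (degree distribution), with mean $\langle d\rangle_i=\sum_d P_i(d)d>0$ and finite second moment $\langle d^2\rangle_i=\sum_dP_i(d)d^2$; let $\widetilde d_i=\langle d^2\rangle_i/\langle d\rangle_i$. Each meeting of a type-$i$ agent is with its own type with probability $\pi\in(0,1)$ and with the other type with probability $1-\pi$. In the SIS process a susceptible type-$i$ agent becomes infected at rate $\nu_i>0$ per infected agent met, infected type-$i$ agents recover at rate $\delta_i>0$, $\lambda_i=\nu_i/\delta_i$, and meetings are biased proportionally to degree. Let $x_i=\lambda_i\widetilde d_i$ and $$A=\begin{pmatrix}\pi x_1 & (1-\pi)x_2\\ (1-\pi)x_1 & \pi x_2\end{pmatrix}.$$ Diffusion occurs from a small seed means: for every $\varepsilon>0$ there exists $v\in\mathbb{R}^2$ with $0<v_i<\varepsilon$ and $(Av)_i>v_i$ for $i=1,2$. (The condition $x_i>1$ is the condition for diffusion within type $i$ when isolated, i.e. at $\pi=1$.) *)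

theory Defs
  imports "HOL-Analysis.Analysis"
begin

definition is_degree_dist :: "(nat \<Rightarrow> real) \<Rightarrow> bool" where
  "is_degree_dist P \<longleftrightarrow> (\<forall>d. 0 \<le> P d) \<and> P sums 1
      \<and> summable (\<lambda>d. P d * (real d)^2)"

definition mean_deg :: "(nat \<Rightarrow> real) \<Rightarrow> real" where
  "mean_deg P = (\<Sum>d. P d * real d)"

definition second_moment :: "(nat \<Rightarrow> real) \<Rightarrow> real" where
  "second_moment P = (\<Sum>d. P d * (real d)^2)"

definition dtilde :: "(nat \<Rightarrow> real) \<Rightarrow> real" where
  "dtilde P = second_moment P / mean_deg P"

definition Amat :: "real \<Rightarrow> real \<Rightarrow> real \<Rightarrow> real^2^2" where
  "Amat p x1 x2 = (\<chi> i j. if i = 1 then (if j = 1 then p * x1 else (1 - p) * x2)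
                            else (if j = 1 then (1 - p) * x1 else p * x2))"

definition diffusion_small_seed :: "real \<Rightarrow> real \<Rightarrow> real \<Rightarrow> bool" where
  "diffusion_small_seed p x1 x2 \<longleftrightarrow>
     (\<forall>\<epsilon>>0. \<exists>v::real^2. (\<forall>i. 0 < v $ i \<and> v $ i < \<epsilon>)
        \<and> (\<forall>i. (Amat p x1 x2 *v v) $ i > v $ i))"

end

theory Submission
  imports Defs
begin

lemma Amat_1: "(Amat p x1 x2 *v v) $ 1 = p*x1* v$1 + (1-p)*x2* v$2"
  by (simp add: Amat_def matrix_vector_mult_def sum_2)
lemma Amat_2: "(Amat p x1 x2 *v v) $ 2 = (1-p)*x1* v$1 + p*x2* v$2"
  by (simp add: Amat_def matrix_vector_mult_def sum_2)

lemma dtilde_nonneg: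
  assumes "is_degree_dist P" "mean_deg P > 0"
  shows "dtilde P \<ge> 0"
proof -
  have "second_moment P \<ge> 0" using assms(1) unfolding is_degree_dist_def second_moment_def
    by (intro suminf_nonneg) auto
  thus ?thesis using assms(2) unfolding dtilde_def by simp
qed

lemma part1:
  assumes "x1 > 1" "x2 > 1" "0 < p" "p < 1"
  shows "diffusion_small_seed p x1 x2"
  unfolding diffusion_small_seed_def
proof (intro allI impI)
  fix e :: real assume e: "e > 0"
  let ?v = "vector [e/2, e/2] :: real^2"
  have "?v$1 = e/2" "?v$2 = e/2" by simp_all
  moreover have "p*x1*(e/2) + (1-p)*x2*(e/2) > e/2"
  proof -
    have "p*x1 + (1-p)*x2 > p + (1-p)" using assms
      by (intro add_less_le_mono) (auto intro: mult_strict_left_mono)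
    hence "(p*x1 + (1-p)*x2) * (e/2) > 1 * (e/2)" using e
      by (intro mult_strict_right_mono) auto
    thus ?thesis by (simp only: distrib_right mult_1_left)
  qed
  moreover have "(1-p)*x1*(e/2) + p*x2*(e/2) > e/2"
  proof -
    have "(1-p)*x1 + p*x2 > (1-p) + p" using assms
      by (intro add_less_le_mono) (auto intro: mult_strict_left_mono)
    hence "((1-p)*x1 + p*x2) * (e/2) > 1 * (e/2)" using e
      by (intro mult_strict_right_mono) auto
    thus ?thesis by (simp only: distrib_right mult_1_left)
  qed
  ultimately show "\<exists>v::real^2. (\<forall>i. 0 < v $ i \<and> v $ i < e) \<and> (\<forall>i. (Amat p x1 x2 *v v) $ i > v $ i)"
    using e by (intro exI[of _ ?v]) (auto simp: forall_2 Amat_1 Amat_2)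
qed

lemma part2:
  assumes "x1 \<le> 1" "x2 \<le> 1" "0 < p" "p < 1"
  shows "\<not> diffusion_small_seed p x1 x2"
proof
  assume "diffusion_small_seed p x1 x2"
  then obtain v :: "real^2" where v: "\<forall>i. 0 < v $ i" "\<forall>i. (Amat p x1 x2 *v v) $ i > v $ i"
    unfolding diffusion_small_seed_def by (metis zero_less_one)
  have a: "p*x1* v$1 + (1-p)*x2* v$2 > v$1" "(1-p)*x1* v$1 + p*x2* v$2 > v$2"
    using v(2) by (metis Amat_1 Amat_2)+
  have "x1* v$1 \<le> v$1" "x2* v$2 \<le> v$2" using v(1) assms
    by (simp_all add: mult_right_le_one_le mult_le_cancel_right1)
  moreover have "p*x1 * v$1 + (1-p)*x2 * v$2 + ((1-p)*x1 * v$1 + p*x2 * v$2) = x1 * v$1 + x2 * v$2"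
    by (simp add: algebra_simps)
  ultimately show False using a by linarith
qed

lemma part3:
  assumes "x1 > 1" "x2 \<ge> 0" "1/x1 < p" "p < 1"
  shows "diffusion_small_seed p x1 x2"
  unfolding diffusion_small_seed_def
proof (intro allI impI)
  fix e :: real assume e: "e > 0"
  define a where "a = e/(2*(1+x1))"
  define b where "b = (1-p)*x1*a/2"
  have d: "2*(1+x1) > 1" using assms(1) by simp
  have a0: "a > 0" "a < e"
  proof -
    show "a > 0" using e d unfolding a_def by (intro divide_pos_pos) auto
    have "e/(2*(1+x1)) < e/1" using e d by (intro divide_strict_left_mono) auto
    thus "a < e" unfolding a_def by simp
  qed
  have b0: "b > 0" unfolding b_def using a0 assms by auto
  have px: "p*x1 > 1" using assms by (simp add: field_simps)
  have "0 < 1/x1" using assms(1) by simp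
  hence p0: "p > 0" using assms(3) by linarith
  have ea: "2*(1+x1)*a = e" unfolding a_def using d by simp
  have "x1*a < 2*(1+x1)*a" using a0(1) assms(1) by (intro mult_strict_right_mono) auto
  hence "x1*a < e" using ea by simp
  moreover have "(1-p)*(x1*a) \<le> x1*a" using a0 assms p0 by (intro mult_left_le_one_le) auto
  ultimately have be: "b < e" unfolding b_def using a0 by (simp add: mult.assoc)
  let ?v = "vector [a, b] :: real^2"
  have c1: "p*x1*a + (1-p)*x2*b > a"
  proof -
    have "p*x1*a > a" using px a0 by simp
    moreover have "(1-p)*x2*b \<ge> 0" using assms b0 by simp
    ultimately show ?thesis by linarith
  qed
  have c2: "(1-p)*x1*a + p*x2*b > b"
  proof -
    have "(1-p)*x1*a = 2*b" unfolding b_def by simp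
    moreover have "p*x2*b \<ge> 0" using assms b0 p0 by (intro mult_nonneg_nonneg) auto
    ultimately show ?thesis using b0 by linarith
  qed
  show "\<exists>v::real^2. (\<forall>i. 0 < v $ i \<and> v $ i < e) \<and> (\<forall>i. (Amat p x1 x2 *v v) $ i > v $ i)"
  proof -
    have v1: "?v$1 = a" "?v$2 = b" by simp_all
    have "\<forall>i. 0 < ?v $ i \<and> ?v $ i < e" unfolding forall_2 v1 using a0 b0 be by simp
    moreover have "\<forall>i. (Amat p x1 x2 *v ?v) $ i > ?v $ i"
      unfolding forall_2 Amat_1 Amat_2 v1 using c1 c2 by simp
    ultimately show ?thesis by blast
  qed
qed

lemma Amat_swap: "(Amat p x1 x2 *v v) $ 1 = (Amat p x2 x1 *v (vector [v$2, v$1])) $ 2"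
  "(Amat p x1 x2 *v v) $ 2 = (Amat p x2 x1 *v (vector [v$2, v$1])) $ 1"
  by (simp_all add: Amat_1 Amat_2)

lemma diff_swap:
  assumes "diffusion_small_seed p x2 x1" shows "diffusion_small_seed p x1 x2"
  unfolding diffusion_small_seed_def
proof (intro allI impI)
  fix e :: real assume "e > 0"
  then obtain v :: "real^2" where v: "\<forall>i. 0 < v $ i \<and> v $ i < e" "\<forall>i. (Amat p x2 x1 *v v) $ i > v $ i"
    using assms unfolding diffusion_small_seed_def by blast
  let ?w = "vector [v$2, v$1] :: real^2"
  have w: "?w$1 = v$2" "?w$2 = v$1" by simp_all
  have h1: "0 < v$1" "v$1 < e" "0 < v$2" "v$2 < e" using v(1) by auto
  have h2: "(1-p)*x2 * v$1 + p*x1 * v$2 > v$2" "p*x2 * v$1 + (1-p)*x1 * v$2 > v$1"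
    using v(2)[rule_format, of 2] v(2)[rule_format, of 1] unfolding Amat_1 Amat_2 by auto
  have "\<forall>i. 0 < ?w $ i \<and> ?w $ i < e" unfolding forall_2 w using h1 by simp
  moreover have "\<forall>i. (Amat p x1 x2 *v ?w) $ i > ?w $ i"
    unfolding forall_2 Amat_1 Amat_2 w using h2 by (simp add: algebra_simps)
  ultimately show "\<exists>v::real^2. (\<forall>i. 0 < v $ i \<and> v $ i < e) \<and> (\<forall>i. (Amat p x1 x2 *v v) $ i > v $ i)"
    by blast
qed

theorem corollary1:
  fixes P1 P2 :: "nat \<Rightarrow> real" and \<nu>1 \<nu>2 \<delta>1 \<delta>2 x1 x2 :: real
  assumes "is_degree_dist P1" and "is_degree_dist P2"
    and "mean_deg P1 > 0" and "mean_deg P2 > 0"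
    and "\<nu>1 > 0" and "\<nu>2 > 0" and "\<delta>1 > 0" and "\<delta>2 > 0"
    and "x1 = (\<nu>1 / \<delta>1) * dtilde P1" and "x2 = (\<nu>2 / \<delta>2) * dtilde P2"
  shows "(x1 > 1 \<and> x2 > 1 \<longrightarrow> (\<forall>\<pi>\<in>{0<..<1}. diffusion_small_seed \<pi> x1 x2))
       \<and> (x1 \<le> 1 \<and> x2 \<le> 1 \<longrightarrow> (\<forall>\<pi>\<in>{0<..<1}. \<not> diffusion_small_seed \<pi> x1 x2))
       \<and> ((x1 > 1 \<and> x2 \<le> 1) \<or> (x2 > 1 \<and> x1 \<le> 1) \<longrightarrow>
            (\<exists>\<pi>s\<in>{0<..<1}. \<forall>\<pi>\<in>{\<pi>s<..<1}. diffusion_small_seed \<pi> x1 x2))"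
proof -
  have x1: "x1 \<ge> 0" using assms dtilde_nonneg[of P1] by simp
  have x2: "x2 \<ge> 0" using assms dtilde_nonneg[of P2] by simp
  have 3: "\<exists>\<pi>s\<in>{0<..<1}. \<forall>\<pi>\<in>{\<pi>s<..<1}. diffusion_small_seed \<pi> x1 x2"
    if h: "(x1 > 1 \<and> x2 \<le> 1) \<or> (x2 > 1 \<and> x1 \<le> 1)"
  proof (cases "x1 > 1")
    case True
    have "1/x1 \<in> {0<..<1}" using True by simp
    moreover have "\<forall>\<pi>\<in>{1/x1<..<1}. diffusion_small_seed \<pi> x1 x2"
    proof
      fix q assume "q \<in> {1/x1<..<1}"
      thus "diffusion_small_seed q x1 x2" using part3[of x1 x2 q] True x2 by simp
    qed
    ultimately show ?thesis by blast
  next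
    case False
    hence T: "x2 > 1" using h by auto
    have "1/x2 \<in> {0<..<1}" using T by simp
    moreover have "\<forall>\<pi>\<in>{1/x2<..<1}. diffusion_small_seed \<pi> x1 x2"
    proof
      fix q assume "q \<in> {1/x2<..<1}"
      thus "diffusion_small_seed q x1 x2" using diff_swap part3[of x2 x1 q] T x1 by simp
    qed
    ultimately show ?thesis by blast
  qed
  have 1: "\<forall>\<pi>\<in>{0<..<1}. diffusion_small_seed \<pi> x1 x2" if "x1 > 1 \<and> x2 > 1"
    using part1 that by simp
  have 2: "\<forall>\<pi>\<in>{0<..<1}. \<not> diffusion_small_seed \<pi> x1 x2" if "x1 \<le> 1 \<and> x2 \<le> 1"
    using part2 that by simp
  show ?thesis using 1 2 3 by blast
qed

end
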